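(* Let $n,b$ be integers with $1<n<b$. The $(n,b)$-Hoey-Sloane graph $\Gamma$ is symmetric, i.e. $\Gamma=\overline{\Gamma}$ as edge-labelled graphs.
   Context: Let $\lambda(x)$ denote the least non-negative residue of $x$ modulo $b$. The $(n,b)$-mother graph $M$ is the directed graph on vertex set $\{0,\ldots,b-1\}$ whose edges are the ordered pairs of digits $(d_1,d_2)$ with $\lambda(d_1+(b-n)d_2)\le n-1$. The $(n,b)$-Hoey-Sloane graph $\Gamma$ is the edge-labelled directed graph with vertex set $\{0,\ldots,n-1\}$ in which $(c_1,c_2)$ is an edge precisely when the set $\{(d_1,d_2)\in E(M) \mid n d_2-d_1+c_1=b c_2\}$ is nonempty, this set being its collection of edge labels. For a state $c$ write $\overline{c}=n-1-c$ and for a digit $d$ write $\overline{d}=b-1-d$. For an edge-labelled subgraph $\Gamma_0$ of $\Gamma$, its reflection $\overline{\Gamma}_0$ is the edge-labelled graph whose vertices are the $\overline{c}$ for vertices $c$ of $\Gamma_0$, whose edges are the $(\overline{c}_1,\overline{c}_2)$ for edges $(c_1,c_2)$ of $\Gamma_0$, and in which $(\overline{d}_1,\overline{d}_2)$ is a label of $(\overline{c}_1,\overline{c}_2)$ whenever $(d_1,d_2)$ is a label of $(c_1,c_2)$ in $\Gamma_0$. $\Gamma_0$ is symmetric if $\Gamma_0=\overline{\Gamma}_0$. *)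

theory Defs
  imports Main
begin

definition lam :: "int \<Rightarrow> int \<Rightarrow> int" where
  "lam b x = x mod b"

definition mother_edges :: "int \<Rightarrow> int \<Rightarrow> (int \<times> int) set" where
  "mother_edges n b = {(d1, d2). d1 \<in> {0..b-1} \<and> d2 \<in> {0..b-1} \<and>
                                 lam b (d1 + (b - n) * d2) \<le> n - 1}"

record 'l elgraph =
  verts :: "int set"
  edges :: "(int \<times> int) set"
  labels :: "int \<times> int \<Rightarrow> 'l set"

definition HS_labels :: "int \<Rightarrow> int \<Rightarrow> int \<times> int \<Rightarrow> (int \<times> int) set" where
  "HS_labels n b e = (case e of (c1, c2) \<Rightarrow>
     (if c1 \<in> {0..n-1} \<and> c2 \<in> {0..n-1}
      then {(d1, d2) \<in> mother_edges n b. n * d2 - d1 + c1 = b * c2} else {}))"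

definition hoey_sloane :: "int \<Rightarrow> int \<Rightarrow> (int \<times> int) elgraph" where
  "hoey_sloane n b = \<lparr> verts = {0..n-1},
     edges = {(c1, c2). c1 \<in> {0..n-1} \<and> c2 \<in> {0..n-1} \<and> HS_labels n b (c1, c2) \<noteq> {}},
     labels = HS_labels n b \<rparr>"

definition state_bar :: "int \<Rightarrow> int \<Rightarrow> int" where
  "state_bar n c = n - 1 - c"

definition digit_bar :: "int \<Rightarrow> int \<Rightarrow> int" where
  "digit_bar b d = b - 1 - d"

text \<open>Reflection of an edge-labelled subgraph. Since state_bar is an involution,
  (x,y) is labelled by (bar d1, bar d2) iff (bar x, bar y) is labelled by (d1,d2).\<close>
definition reflect :: "int \<Rightarrow> int \<Rightarrow> (int \<times> int) elgraph \<Rightarrow> (int \<times> int) elgraph" where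
  "reflect n b G = \<lparr> verts = state_bar n ` verts G,
     edges = (\<lambda>(c1, c2). (state_bar n c1, state_bar n c2)) ` edges G,
     labels = (\<lambda>(x, y). (\<lambda>(d1, d2). (digit_bar b d1, digit_bar b d2)) `
                         labels G (state_bar n x, state_bar n y)) \<rparr>"

definition symmetric_graph :: "int \<Rightarrow> int \<Rightarrow> (int \<times> int) elgraph \<Rightarrow> bool" where
  "symmetric_graph n b G \<longleftrightarrow> G = reflect n b G"

end

theory Submission
  imports Defs
begin

lemma HS_mem:
  fixes n b :: int
  assumes "0 < n" and "n < b"
  shows "(d1,d2) \<in> HS_labels n b (x,y) \<longleftrightarrow>
    x \<in> {0..n-1} \<and> y \<in> {0..n-1} \<and> d1 \<in> {0..b-1} \<and> d2 \<in> {0..b-1} \<and> n*d2 - d1 + x = b*y"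
proof -
  have "lam b (d1 + (b - n) * d2) \<le> n - 1"
    if "x \<in> {0..n-1}" "n*d2 - d1 + x = b*y"
  proof -
    have "d1 + (b - n) * d2 = x + b * (d2 - y)" using that(2) by (simp add: algebra_simps)
    hence "lam b (d1 + (b - n) * d2) = x mod b" by (simp add: lam_def)
    also have "\<dots> = x" using that(1) assms by (simp add: mod_pos_pos_trivial)
    finally show ?thesis using that(1) by simp
  qed
  thus ?thesis unfolding HS_labels_def mother_edges_def by auto
qed

lemma HS_bar:
  fixes n b :: int
  assumes "0 < n" and "n < b"
  shows "(d1,d2) \<in> HS_labels n b (x,y) \<longleftrightarrow>
    (digit_bar b d1, digit_bar b d2) \<in> HS_labels n b (state_bar n x, state_bar n y)"
proof -
  have e: "n*(b - 1 - d2) - (b - 1 - d1) + (n - 1 - x) = b*(n - 1 - y) \<longleftrightarrow> n*d2 - d1 + x = b*y"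
    by (simp add: algebra_simps) linarith
  show ?thesis
    unfolding HS_mem[OF assms] digit_bar_def state_bar_def e
    by auto
qed

theorem corollary12:
  fixes n b :: int
  assumes "1 < n" and "n < b"
  shows "symmetric_graph n b (hoey_sloane n b)"
proof -
  have n0: "0 < n" using assms by simp
  have sbi: "state_bar n (state_bar n c) = c" for c by (simp add: state_bar_def)
  have dbi: "digit_bar b (digit_bar b c) = c" for c by (simp add: digit_bar_def)
  have V: "state_bar n ` {0..n-1} = {0..n-1}"
  proof
    show "state_bar n ` {0..n-1} \<subseteq> {0..n-1}" by (auto simp: state_bar_def)
    show "{0..n-1} \<subseteq> state_bar n ` {0..n-1}"
    proof
      fix c assume "c \<in> {0..n-1}"
      thus "c \<in> state_bar n ` {0..n-1}"
        by (intro image_eqI[of _ _ "state_bar n c"]) (auto simp: state_bar_def)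
    qed
  qed
  have L: "HS_labels n b (x,y) = (\<lambda>(d1, d2). (digit_bar b d1, digit_bar b d2)) `
             HS_labels n b (state_bar n x, state_bar n y)" for x y
  proof
    show "HS_labels n b (x,y) \<subseteq> (\<lambda>(d1, d2). (digit_bar b d1, digit_bar b d2)) `
             HS_labels n b (state_bar n x, state_bar n y)"
    proof
      fix p assume p: "p \<in> HS_labels n b (x,y)"
      obtain d1 d2 where pd: "p = (d1,d2)" by force
      have "(digit_bar b d1, digit_bar b d2) \<in> HS_labels n b (state_bar n x, state_bar n y)"
        using p pd HS_bar[OF n0 assms(2), of d1 d2 x y] by blast
      thus "p \<in> (\<lambda>(d1, d2). (digit_bar b d1, digit_bar b d2)) `
             HS_labels n b (state_bar n x, state_bar n y)"
        using pd dbi by (intro image_eqI[of _ _ "(digit_bar b d1, digit_bar b d2)"]) auto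
    qed
    show "(\<lambda>(d1, d2). (digit_bar b d1, digit_bar b d2)) `
             HS_labels n b (state_bar n x, state_bar n y) \<subseteq> HS_labels n b (x,y)"
    proof
      fix p assume "p \<in> (\<lambda>(d1, d2). (digit_bar b d1, digit_bar b d2)) `
             HS_labels n b (state_bar n x, state_bar n y)"
      then obtain d1 d2 where q: "(d1,d2) \<in> HS_labels n b (state_bar n x, state_bar n y)"
        and pd: "p = (digit_bar b d1, digit_bar b d2)" by auto
      show "p \<in> HS_labels n b (x,y)"
        using HS_bar[OF n0 assms(2), of "digit_bar b d1" "digit_bar b d2" x y] q pd dbi by metis
    qed
  qed
  have NE: "HS_labels n b (x,y) \<noteq> {} \<longleftrightarrow> HS_labels n b (state_bar n x, state_bar n y) \<noteq> {}" for x y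
    by (subst L[of x y]) (simp only: image_is_empty)
  have E: "{(c1, c2). c1 \<in> {0..n-1} \<and> c2 \<in> {0..n-1} \<and> HS_labels n b (c1, c2) \<noteq> {}}
    = (\<lambda>(c1, c2). (state_bar n c1, state_bar n c2)) `
      {(c1, c2). c1 \<in> {0..n-1} \<and> c2 \<in> {0..n-1} \<and> HS_labels n b (c1, c2) \<noteq> {}}"
    (is "?A = ?f ` ?A")
  proof
    show "?A \<subseteq> ?f ` ?A"
    proof
      fix p assume p: "p \<in> ?A"
      obtain x y where pd: "p = (x,y)" by force
      have "(state_bar n x, state_bar n y) \<in> ?A"
      proof -
        have "HS_labels n b (state_bar n x, state_bar n y) \<noteq> {}" using p pd NE[of x y] by blast
        moreover have "state_bar n x \<in> {0..n-1}" "state_bar n y \<in> {0..n-1}"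
          using p pd by (auto simp: state_bar_def)
        ultimately show ?thesis by blast
      qed
      thus "p \<in> ?f ` ?A" using pd sbi
        by (intro image_eqI[of _ _ "(state_bar n x, state_bar n y)"]) auto
    qed
    show "?f ` ?A \<subseteq> ?A"
    proof
      fix p assume "p \<in> ?f ` ?A"
      then obtain x y where q: "(x,y) \<in> ?A" and pd: "p = (state_bar n x, state_bar n y)" by auto
      have "HS_labels n b (state_bar n x, state_bar n y) \<noteq> {}"
        using q NE[of x y] by blast
      moreover have "state_bar n x \<in> {0..n-1}" "state_bar n y \<in> {0..n-1}"
        using q by (auto simp: state_bar_def)
      ultimately show "p \<in> ?A" using pd by blast
    qed
  qed
  have LL: "HS_labels n b = (\<lambda>(x, y). (\<lambda>(d1, d2). (digit_bar b d1, digit_bar b d2)) `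
                         HS_labels n b (state_bar n x, state_bar n y))"
    by (rule ext, clarify, rule L)
  show ?thesis
    unfolding symmetric_graph_def reflect_def hoey_sloane_def
    apply (simp only: elgraph.simps V)
    apply (subst E)
    apply (subst LL)
    apply (simp only: LL[symmetric])
    done
qed

end
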